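(* Let $n\in\mathbb{N}$ and let $X$ be the set of all compact subsets of $(0,1)^n$ with nonempty interior (in $\mathbb{R}^n$), with the subspace topology of $\mathcal{K}((0,1)^n)$. Then there is a continuous map $\Phi:\mathcal{K}([0,1]^n)\to X$ such that for all $K,L\in\mathcal{K}([0,1]^n)$, $K$ is homeomorphic to $L$ if and only if $\Phi(K)$ is homeomorphic to $\Phi(L)$.
   Context: $\mathcal{K}(Z)$ denotes the space of compact subsets of $Z$ with the Vietoris topology. *)

theory Defs
  imports "HOL-Analysis.Analysis"
begin

definition compact_subsets :: "'a::topological_space set \<Rightarrow> 'a set set" where
  "compact_subsets Z = {K. compact K \<and> K \<subseteq> Z}"

definition vietoris_topology :: "'a::topological_space set \<Rightarrow> 'a set topology" where
  "vietoris_topology Z = topology_generated_by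
     ({{K \<in> compact_subsets Z. K \<subseteq> U} | U. openin (top_of_set Z) U} \<union>
      {{K \<in> compact_subsets Z. K \<inter> U \<noteq> {}} | U. openin (top_of_set Z) U})"

end

theory Submission imports Defs begin

lemma cancel_connected:
  fixes A B Q :: "'a::metric_space set"
  assumes cA: "compact A" and cB: "compact B" and cQ: "compact Q" and conQ: "connected Q"
    and dA: "A \<inter> Q = {}" and dB: "B \<inter> Q = {}"
    and hom: "(A \<union> Q) homeomorphic (B \<union> Q)"
  shows "A homeomorphic B"
proof -
  obtain h h' where H: "homeomorphism (A \<union> Q) (B \<union> Q) h h'"
    using hom unfolding homeomorphic_def by blast
  have hh: "\<And>x. x \<in> A \<union> Q \<Longrightarrow> h' (h x) = x" and hh': "\<And>y. y \<in> B \<union> Q \<Longrightarrow> h (h' y) = y"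
    and him: "h ` (A \<union> Q) = B \<union> Q" and h'im: "h' ` (B \<union> Q) = A \<union> Q"
    and hc: "continuous_on (A \<union> Q) h" and h'c: "continuous_on (B \<union> Q) h'"
    using H unfolding homeomorphism_def by auto
  have clA: "closed A" "closed B" "closed Q" using cA cB cQ compact_imp_closed by auto
  show ?thesis
  proof (cases "h ` Q \<inter> Q = {}")
    case False
    have "connected (h ` Q)"
      by (rule connected_continuous_image[OF continuous_on_subset[OF hc] conQ]) auto
    moreover have "h ` Q \<subseteq> B \<union> Q" using him by auto
    ultimately have "B \<inter> h ` Q = {} \<or> Q \<inter> h ` Q = {}"
      using connected_closedD[of "h ` Q" B Q] clA dB by auto
    with False have hQ: "h ` Q \<subseteq> Q" using \<open>h ` Q \<subseteq> B \<union> Q\<close> by auto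
    have "connected (h' ` Q)"
      by (rule connected_continuous_image[OF continuous_on_subset[OF h'c] conQ]) auto
    moreover have "h' ` Q \<subseteq> A \<union> Q" using h'im by auto
    moreover have "h' ` Q \<inter> Q \<noteq> {}"
    proof -
      obtain q where "q \<in> Q" "h q \<in> Q" using False by auto
      then have "h' (h q) = q" using hh by auto
      then show ?thesis using \<open>h q \<in> Q\<close> \<open>q \<in> Q\<close> by force
    qed
    ultimately have h'Q: "h' ` Q \<subseteq> Q"
      using connected_closedD[of "h' ` Q" A Q] clA dA by auto
    have "h ` A = B"
    proof
      show "h ` A \<subseteq> B"
      proof
        fix y assume "y \<in> h ` A"
        then obtain x where x: "x \<in> A" "y = h x" by auto
        have "y \<in> B \<union> Q" using him x by auto
        moreover have "y \<notin> Q"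
        proof
          assume "y \<in> Q"
          then have "h' y \<in> Q" using h'Q by auto
          then show False using hh[of x] x dA by auto
        qed
        ultimately show "y \<in> B" by auto
      qed
      show "B \<subseteq> h ` A"
      proof
        fix b assume b: "b \<in> B"
        then have "h' b \<in> A \<union> Q" using h'im by auto
        moreover have "h' b \<notin> Q"
        proof
          assume "h' b \<in> Q"
          then have "h (h' b) \<in> Q" using hQ by auto
          then show False using hh'[of b] b dB by auto
        qed
        ultimately have "h' b \<in> A" by auto
        then show "b \<in> h ` A" using hh'[of b] b by (metis UnI1 image_eqI)
      qed
    qed
    moreover have "inj_on h A" by (metis hh UnI1 inj_onI)
    moreover have "continuous_on A h" using continuous_on_subset[OF hc] by auto
    ultimately show ?thesis using homeomorphism_compact[OF cA] unfolding homeomorphic_def by blast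
  next
    case True
    define g where "g x = (if h x \<in> Q then h (h x) else h x)" for x
    define D where "D = A \<inter> h -` Q"
    define E where "E = A \<inter> h -` B"
    have AU: "A = D \<union> E" unfolding D_def E_def using him by auto
    have hA: "h x \<in> B \<union> Q" if "x \<in> A" for x using him that by auto
    have clD: "closed D"
    proof -
      have "closed ((A \<union> Q) \<inter> h -` Q)"
        using continuous_closed_preimage[OF hc] clA by auto
      then have "closed (A \<inter> ((A \<union> Q) \<inter> h -` Q))" using clA by auto
      moreover have "A \<inter> ((A \<union> Q) \<inter> h -` Q) = D" unfolding D_def by auto
      ultimately show ?thesis by simp
    qed
    have clE: "closed E"
    proof -
      have "closed ((A \<union> Q) \<inter> h -` B)"
        using continuous_closed_preimage[OF hc] clA by auto
      then have "closed (A \<inter> ((A \<union> Q) \<inter> h -` B))" using clA by auto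
      moreover have "A \<inter> ((A \<union> Q) \<inter> h -` B) = E" unfolding E_def by auto
      ultimately show ?thesis by simp
    qed
    have cD: "continuous_on D g"
    proof -
      have "continuous_on D (h \<circ> h)"
      proof (rule continuous_on_compose)
        show "continuous_on D h" by (rule continuous_on_subset[OF hc]) (auto simp: D_def)
        show "continuous_on (h ` D) h" by (rule continuous_on_subset[OF hc]) (auto simp: D_def)
      qed
      then show ?thesis by (rule continuous_on_eq) (auto simp: D_def g_def)
    qed
    have cE: "continuous_on E g"
    proof -
      have "continuous_on E h" by (rule continuous_on_subset[OF hc]) (auto simp: E_def)
      then show ?thesis by (rule continuous_on_eq) (use dB in \<open>auto simp: E_def g_def\<close>)
    qed
    have cg: "continuous_on A g" using continuous_on_closed_Un[OF clD clE cD cE] AU by simp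
    have hQB: "h ` Q \<subseteq> B" using True him by auto
    have gim: "g ` A = B"
    proof
      show "g ` A \<subseteq> B"
      proof
        fix y assume "y \<in> g ` A"
        then obtain x where x: "x \<in> A" "y = g x" by auto
        show "y \<in> B"
        proof (cases "h x \<in> Q")
          case True then show ?thesis using x hQB by (auto simp: g_def)
        next
          case False then show ?thesis using x hA[of x] by (auto simp: g_def)
        qed
      qed
      show "B \<subseteq> g ` A"
      proof
        fix b assume b: "b \<in> B"
        then have a: "h' b \<in> A \<union> Q" "h (h' b) = b" using h'im hh' by auto
        show "b \<in> g ` A"
        proof (cases "h' b \<in> Q")
          case False
          then have "h' b \<in> A" using a by auto
          moreover have "g (h' b) = b" using a b dB by (auto simp: g_def)
          ultimately show ?thesis by (metis image_eqI)
        next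
          case inQ: True
          then have c: "h' (h' b) \<in> A \<union> Q" "h (h' (h' b)) = h' b" using h'im hh' by auto
          have "h' (h' b) \<notin> Q"
          proof
            assume "h' (h' b) \<in> Q"
            then have "h (h' (h' b)) \<in> h ` Q" by auto
            then show False using c inQ True by auto
          qed
          then have "h' (h' b) \<in> A" using c by auto
          moreover have "g (h' (h' b)) = b" using c a inQ by (auto simp: g_def)
          ultimately show ?thesis by (metis image_eqI)
        qed
      qed
    qed
    have ginj: "inj_on g A"
    proof (rule inj_onI)
      fix x y assume x: "x \<in> A" and y: "y \<in> A" and e: "g x = g y"
      have hx: "h x \<in> A \<union> Q \<Longrightarrow> True" by simp
      consider "h x \<in> Q" "h y \<in> Q" | "h x \<in> Q" "h y \<notin> Q" | "h x \<notin> Q" "h y \<in> Q" | "h x \<notin> Q" "h y \<notin> Q" by blast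
      then show "x = y"
      proof cases
        case 1
        then have "h (h x) = h (h y)" using e by (simp add: g_def)
        then have "h x = h y" using hh 1 by (metis UnI2)
        then show ?thesis using hh x y by (metis UnI1)
      next
        case 2
        then have "h (h x) = h y" using e by (simp add: g_def)
        then have "h x = y" using hh 2 x y by (metis UnI1 UnI2)
        then show ?thesis using 2 y dA by auto
      next
        case 3
        then have "h x = h (h y)" using e by (simp add: g_def)
        then have "x = h y" using hh 3 x y by (metis UnI1 UnI2)
        then show ?thesis using 3 x dA by auto
      next
        case 4
        then have "h x = h y" using e by (simp add: g_def)
        then show ?thesis using hh x y by (metis UnI1)
      qed
    qed
    show ?thesis using homeomorphism_compact[OF cA cg gim ginj] unfolding homeomorphic_def by blast
  qed
qed


lemma extend_homeo:
  fixes A B Q :: "'a::metric_space set"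
  assumes cA: "compact A" and cB: "compact B" and cQ: "compact Q"
    and dA: "A \<inter> Q = {}" and dB: "B \<inter> Q = {}"
    and hom: "A homeomorphic B"
  shows "(A \<union> Q) homeomorphic (B \<union> Q)"
proof -
  obtain f f' where H: "homeomorphism A B f f'" using hom unfolding homeomorphic_def by blast
  have ff: "\<And>x. x \<in> A \<Longrightarrow> f' (f x) = x" and fim: "f ` A = B" and fc: "continuous_on A f"
    using H unfolding homeomorphism_def by auto
  define g where "g x = (if x \<in> A then f x else x)" for x
  have cg: "continuous_on (A \<union> Q) g"
  proof (rule continuous_on_closed_Un)
    show "closed A" "closed Q" using cA cQ compact_imp_closed by auto
    show "continuous_on A g" using fc by (rule continuous_on_eq) (auto simp: g_def)
    show "continuous_on Q g" using continuous_on_id by (rule continuous_on_eq) (use dA in \<open>auto simp: g_def\<close>)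
  qed
  have gim: "g ` (A \<union> Q) = B \<union> Q"
  proof -
    have "g ` A = B" using fim by (auto simp: g_def image_def)
    moreover have "g ` Q = Q" using dA by (force simp: g_def image_def)
    ultimately show ?thesis by (simp add: image_Un)
  qed
  have ginj: "inj_on g (A \<union> Q)"
  proof (rule inj_onI)
    fix x y assume x: "x \<in> A \<union> Q" and y: "y \<in> A \<union> Q" and e: "g x = g y"
    show "x = y"
    proof (cases "x \<in> A"; cases "y \<in> A")
      assume "x \<in> A" "y \<in> A" then show ?thesis using e ff by (metis g_def)
    next
      assume a: "x \<in> A" "y \<notin> A"
      then have "f x \<in> B" "g y = y" "y \<in> Q" using fim y by (auto simp: g_def)
      then show ?thesis using e a dB by (auto simp: g_def)
    next
      assume a: "x \<notin> A" "y \<in> A"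
      then have "f y \<in> B" "g x = x" "x \<in> Q" using fim x by (auto simp: g_def)
      then show ?thesis using e a dB by (auto simp: g_def)
    next
      assume "x \<notin> A" "y \<notin> A" then show ?thesis using e by (simp add: g_def)
    qed
  qed
  show ?thesis using homeomorphism_compact[OF _ cg gim ginj] cA cQ
    unfolding homeomorphic_def by blast
qed

definition fm :: "real^'n \<Rightarrow> real^'n" where
  "fm x = (1/4) *\<^sub>R x + (1/8) *\<^sub>R 1"

definition QQ :: "(real^'n) set" where
  "QQ = cbox ((5/8) *\<^sub>R 1) ((7/8) *\<^sub>R 1)"

lemma fm_nth [simp]: "fm x $ i = x $ i / 4 + 1/8"
  by (simp add: fm_def)

lemma fm_cont: "continuous_on S fm"
  unfolding fm_def by (intro continuous_intros)

lemma fm_inj: "inj_on fm S"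
  by (rule inj_onI) (simp add: vec_eq_iff)

lemma fm_homeo: "compact K \<Longrightarrow> K homeomorphic (fm ` K)"
  using homeomorphism_compact[OF _ fm_cont refl fm_inj] unfolding homeomorphic_def by blast

lemma QQ_compact: "compact QQ" and QQ_conn: "connected QQ"
  by (auto simp: QQ_def intro: convex_connected)

lemma fm_disj: fixes K :: "(real^'n) set" shows "K \<subseteq> cbox 0 1 \<Longrightarrow> fm ` K \<inter> QQ = {}"
proof -
  assume K: "K \<subseteq> cbox 0 1"
  { fix x :: "real^'n" assume "x \<in> K" "fm x \<in> QQ"
    obtain i :: 'n where True by blast
    have "x $ i \<le> 1" using K \<open>x \<in> K\<close> by (auto simp: mem_box_cart)
    moreover have "5/8 \<le> fm x $ i" using \<open>fm x \<in> QQ\<close> by (auto simp: QQ_def mem_box_cart)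
    ultimately have False by simp }
  then show ?thesis by auto
qed

lemma fm_box: fixes K :: "(real^'n) set" shows "K \<subseteq> cbox 0 1 \<Longrightarrow> fm ` K \<subseteq> box 0 1"
proof
  fix y assume K: "K \<subseteq> cbox 0 1" and "y \<in> fm ` K"
  then obtain x where x: "x \<in> K" "y = fm x" by auto
  then have *: "\<forall>i. 0 \<le> x$i \<and> x$i \<le> 1" using K by (auto simp: mem_box_cart)
  show "y \<in> box 0 1" unfolding mem_box_cart
  proof
    fix i from *[rule_format, of i] show "0$i < y$i \<and> y$i < 1$i" using x by simp
  qed
qed

lemma QQ_box: "QQ \<subseteq> box 0 1"
proof
  fix x :: "real^'n" assume "x \<in> QQ"
  then have "\<forall>i. 5/8 \<le> x$i \<and> x$i \<le> 7/8" by (simp add: QQ_def mem_box_cart)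
  then show "x \<in> box 0 1" unfolding mem_box_cart
  proof -
    assume *: "\<forall>i. 5/8 \<le> x$i \<and> x$i \<le> 7/8"
    show "\<forall>i. 0$i < x$i \<and> x$i < 1$i"
    proof
      fix i from *[rule_format, of i] show "0$i < x$i \<and> x$i < 1$i" by simp
    qed
  qed
qed

lemma QQ_interior: "interior QQ \<noteq> {}"
proof -
  have "box ((5/8) *\<^sub>R 1) ((7/8) *\<^sub>R (1::real^'n)) \<noteq> {}"
    by (simp add: interval_eq_empty_cart)
  then show ?thesis by (simp add: QQ_def)
qed

lemma vietoris_topspace: "topspace (vietoris_topology Z) = compact_subsets Z"
  unfolding vietoris_topology_def topology_generated_by_topspace
proof (rule antisym)
  show "\<Union> ({{K \<in> compact_subsets Z. K \<subseteq> U} | U. openin (top_of_set Z) U} \<union>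
      {{K \<in> compact_subsets Z. K \<inter> U \<noteq> {}} | U. openin (top_of_set Z) U}) \<subseteq> compact_subsets Z"
    by (rule Union_least) auto
  show "compact_subsets Z \<subseteq> \<Union> ({{K \<in> compact_subsets Z. K \<subseteq> U} | U. openin (top_of_set Z) U} \<union>
      {{K \<in> compact_subsets Z. K \<inter> U \<noteq> {}} | U. openin (top_of_set Z) U})"
  proof
    fix K assume K: "K \<in> compact_subsets Z"
    have "{K \<in> compact_subsets Z. K \<subseteq> Z} \<in> {{K \<in> compact_subsets Z. K \<subseteq> U} | U. openin (top_of_set Z) U}"
      by (rule CollectI, rule exI[of _ Z]) simp
    moreover have "K \<in> {K \<in> compact_subsets Z. K \<subseteq> Z}" using K by (simp add: compact_subsets_def)
    ultimately show "K \<in> \<Union> ({{K \<in> compact_subsets Z. K \<subseteq> U} | U. openin (top_of_set Z) U} \<union>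
      {{K \<in> compact_subsets Z. K \<inter> U \<noteq> {}} | U. openin (top_of_set Z) U})" by (rule UnionI[OF UnI1])
  qed
qed

lemma vietoris_open1: assumes "openin (top_of_set Z) U" shows
   "openin (vietoris_topology Z) {K \<in> compact_subsets Z. K \<subseteq> U}"
  unfolding vietoris_topology_def
  by (rule topology_generated_by_Basis, rule UnI1, rule CollectI, rule exI[of _ U]) (simp add: assms)

lemma vietoris_open2: assumes "openin (top_of_set Z) U" shows
   "openin (vietoris_topology Z) {K \<in> compact_subsets Z. K \<inter> U \<noteq> {}}"
  unfolding vietoris_topology_def
  by (rule topology_generated_by_Basis, rule UnI2, rule CollectI, rule exI[of _ U]) (simp add: assms)

lemma fm_cont_at: "continuous (at x) fm"
  unfolding fm_def by (intro continuous_intros)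

lemma Phi_props:
  fixes K :: "(real^'n) set"
  assumes "K \<in> compact_subsets (cbox 0 1)"
  shows "fm ` K \<union> QQ \<in> {M \<in> compact_subsets (box 0 1). interior M \<noteq> {}}"
proof -
  have K: "compact K" "K \<subseteq> cbox 0 1" using assms by (auto simp: compact_subsets_def)
  have "compact (fm ` K \<union> QQ)"
    using compact_continuous_image[OF fm_cont K(1)] QQ_compact by (rule compact_Un)
  moreover have "fm ` K \<union> QQ \<subseteq> box 0 1" using fm_box[OF K(2)] QQ_box by auto
  moreover have "interior (fm ` K \<union> QQ) \<noteq> {}"
    using QQ_interior interior_mono[of QQ "fm ` K \<union> QQ"] by blast
  ultimately show ?thesis by (simp add: compact_subsets_def)
qed

theorem lemma3p17:
  shows "\<exists>\<Phi> :: (real^'n) set \<Rightarrow> (real^'n) set.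
    continuous_map (vietoris_topology (cbox 0 1))
      (subtopology (vietoris_topology (box 0 1))
         {K \<in> compact_subsets (box 0 1). interior K \<noteq> {}}) \<Phi> \<and>
    (\<forall>K \<in> compact_subsets (cbox 0 1). \<forall>L \<in> compact_subsets (cbox 0 1).
       (K homeomorphic L) \<longleftrightarrow> (\<Phi> K homeomorphic \<Phi> L))"
proof -
  define P :: "(real^'n) set \<Rightarrow> (real^'n) set" where "P K = fm ` K \<union> QQ" for K
  have H1: "\<forall>K \<in> compact_subsets (cbox 0 1). \<forall>L \<in> compact_subsets (cbox 0 1).
       (K homeomorphic L) \<longleftrightarrow> (P K homeomorphic P L)"
  proof (intro ballI)
    fix K L :: "(real^'n) set" assume "K \<in> compact_subsets (cbox 0 1)" "L \<in> compact_subsets (cbox 0 1)"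
    then have K: "compact K" "K \<subseteq> cbox 0 1" and L: "compact L" "L \<subseteq> cbox 0 1"
      by (auto simp: compact_subsets_def)
    have cK: "compact (fm ` K)" using compact_continuous_image[OF fm_cont K(1)] .
    have cL: "compact (fm ` L)" using compact_continuous_image[OF fm_cont L(1)] .
    have "K homeomorphic L \<longleftrightarrow> fm ` K homeomorphic fm ` L"
      using fm_homeo[OF K(1)] fm_homeo[OF L(1)]
      by (meson homeomorphic_sym homeomorphic_trans)
    also have "\<dots> \<longleftrightarrow> P K homeomorphic P L"
      unfolding P_def
      using cancel_connected[OF cK cL QQ_compact QQ_conn fm_disj[OF K(2)] fm_disj[OF L(2)]]
        extend_homeo[OF cK cL QQ_compact fm_disj[OF K(2)] fm_disj[OF L(2)]] by blast
    finally show "K homeomorphic L \<longleftrightarrow> P K homeomorphic P L" .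
  qed
  have H2: "continuous_map (vietoris_topology (cbox 0 1))
      (subtopology (vietoris_topology (box 0 1))
         {K \<in> compact_subsets (box 0 1). interior K \<noteq> {}}) P"
    unfolding continuous_map_in_subtopology
  proof
    show "P \<in> topspace (vietoris_topology (cbox 0 1)) \<rightarrow> {K \<in> compact_subsets (box 0 1). interior K \<noteq> {}}"
      using Phi_props unfolding P_def vietoris_topspace by blast
    show "continuous_map (vietoris_topology (cbox 0 1)) (vietoris_topology (box 0 1)) P"
      unfolding vietoris_topology_def[of "box 0 1"]
    proof (rule continuous_on_generated_topo)
      show "P ` topspace (vietoris_topology (cbox 0 1)) \<subseteq> \<Union>
         ({{K \<in> compact_subsets (box 0 1). K \<subseteq> U} |U. openin (top_of_set (box 0 1)) U} \<union>
          {{K \<in> compact_subsets (box 0 1). K \<inter> U \<noteq> {}} |U. openin (top_of_set (box 0 1)) U})"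
      proof
        fix M assume "M \<in> P ` topspace (vietoris_topology (cbox 0 1))"
        then have "M \<in> compact_subsets (box 0 1)"
          using Phi_props unfolding P_def vietoris_topspace by blast
        moreover have "openin (top_of_set (box 0 1)) (box 0 1)" by simp
        ultimately show "M \<in> \<Union>
         ({{K \<in> compact_subsets (box 0 1). K \<subseteq> U} |U. openin (top_of_set (box 0 1)) U} \<union>
          {{K \<in> compact_subsets (box 0 1). K \<inter> U \<noteq> {}} |U. openin (top_of_set (box 0 1)) U})"
          using vietoris_topspace[of "box (0::real^'n) 1"]
          unfolding vietoris_topology_def topology_generated_by_topspace by simp
      qed
    next
      fix U :: "(real^'n) set set" assume U: "U \<in> {{K \<in> compact_subsets (box 0 1). K \<subseteq> U} |U. openin (top_of_set (box 0 1)) U} \<union>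
          {{K \<in> compact_subsets (box 0 1). K \<inter> U \<noteq> {}} |U. openin (top_of_set (box 0 1)) U}"
      let ?T = "vietoris_topology (cbox (0::real^'n) 1)"
      have gen: "openin (top_of_set (cbox 0 1)) (cbox 0 1 \<inter> fm -` Ob)" if "open Ob" for Ob
        using continuous_open_vimage[OF that fm_cont_at] by blast
      have PK: "P K \<in> compact_subsets (box 0 1)" if "K \<in> compact_subsets (cbox 0 1)" for K
        using Phi_props[OF that] unfolding P_def by blast
      from U show "openin ?T (P -` U \<inter> topspace ?T)"
      proof (elim UnE CollectE exE conjE)
        fix V :: "(real^'n) set" assume UV: "U = {K \<in> compact_subsets (box 0 1). K \<subseteq> V}"
          and V: "openin (top_of_set (box 0 1)) V"
        obtain Ob where Ob: "open Ob" "V = box 0 1 \<inter> Ob" using V openin_open by blast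
        show ?thesis
        proof (cases "QQ \<subseteq> V")
          case True
          have "P -` U \<inter> topspace ?T = {K \<in> compact_subsets (cbox 0 1). K \<subseteq> cbox 0 1 \<inter> fm -` Ob}"
            unfolding vietoris_topspace UV
          proof (intro set_eqI iffI)
            fix K assume "K \<in> P -` {K \<in> compact_subsets (box 0 1). K \<subseteq> V} \<inter> compact_subsets (cbox 0 1)"
            then show "K \<in> {K \<in> compact_subsets (cbox 0 1). K \<subseteq> cbox 0 1 \<inter> fm -` Ob}"
              using Ob by (auto simp: P_def compact_subsets_def)
          next
            fix K assume K: "K \<in> {K \<in> compact_subsets (cbox 0 1). K \<subseteq> cbox 0 1 \<inter> fm -` Ob}"
            then have "fm ` K \<subseteq> box 0 1" using fm_box by (auto simp: compact_subsets_def)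
            then show "K \<in> P -` {K \<in> compact_subsets (box 0 1). K \<subseteq> V} \<inter> compact_subsets (cbox 0 1)"
              using K PK[of K] True Ob by (auto simp: P_def)
          qed
          then show ?thesis using vietoris_open1[OF gen[OF Ob(1)]] by simp
        next
          case False
          then have "P -` U \<inter> topspace ?T = {}" unfolding UV P_def by auto
          then show ?thesis by simp
        qed
      next
        fix V :: "(real^'n) set" assume UV: "U = {K \<in> compact_subsets (box 0 1). K \<inter> V \<noteq> {}}"
          and V: "openin (top_of_set (box 0 1)) V"
        obtain Ob where Ob: "open Ob" "V = box 0 1 \<inter> Ob" using V openin_open by blast
        show ?thesis
        proof (cases "QQ \<inter> V = {}")
          case True
          have "P -` U \<inter> topspace ?T = {K \<in> compact_subsets (cbox 0 1). K \<inter> (cbox 0 1 \<inter> fm -` Ob) \<noteq> {}}"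
            unfolding vietoris_topspace UV
          proof (intro set_eqI iffI)
            fix K assume K: "K \<in> P -` {K \<in> compact_subsets (box 0 1). K \<inter> V \<noteq> {}} \<inter> compact_subsets (cbox 0 1)"
            then obtain y where "y \<in> P K" "y \<in> V" by auto
            then obtain x where "x \<in> K" "fm x \<in> Ob" using True Ob by (auto simp: P_def)
            then show "K \<in> {K \<in> compact_subsets (cbox 0 1). K \<inter> (cbox 0 1 \<inter> fm -` Ob) \<noteq> {}}"
              using K by (auto simp: compact_subsets_def)
          next
            fix K assume K: "K \<in> {K \<in> compact_subsets (cbox 0 1). K \<inter> (cbox 0 1 \<inter> fm -` Ob) \<noteq> {}}"
            then obtain x where x: "x \<in> K" "fm x \<in> Ob" by auto
            have "fm ` K \<subseteq> box 0 1" using K fm_box by (auto simp: compact_subsets_def)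
            then have "fm x \<in> P K \<inter> V" using x Ob by (auto simp: P_def)
            then show "K \<in> P -` {K \<in> compact_subsets (box 0 1). K \<inter> V \<noteq> {}} \<inter> compact_subsets (cbox 0 1)"
              using K PK[of K] by auto
          qed
          then show ?thesis using vietoris_open2[OF gen[OF Ob(1)]] by simp
        next
          case False
          have "P -` U \<inter> topspace ?T = topspace ?T"
            unfolding UV vietoris_topspace using PK False by (auto simp: P_def)
          then show ?thesis by simp
        qed
      qed
    qed
  qed
  show ?thesis using H1 H2 by blast
qed

end
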